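(* Let $(V,\ell)$ be an $L_\infty$-algebra with finite-dimensional components, $V_0=\mathbb{R}^n$, such that $H^1(V,\ell)=0$, and let $h_1:V_1\to V_0$, $h_2:V_2\to V_1$ be linear maps with $\ell_1\circ h_1+h_2\circ\ell_1=\mathrm{id}_{V_1}$. Let $u_0=0$ and $u_1\in\ker(\ell_1|_{V_0})$, and define recursively $u_{k+1}=-h_1(Obs^k)$ for $k\geq1$, where $Obs^k=\sum_{i=2}^{k+1}\sum_{\vec r_i=k+1}\binom{k+1}{\vec r_i}\frac1{i!}\ell_i(u_{r_1},\ldots,u_{r_i})$. Then $u[\![t]\!]=\sum_{k\geq0}\frac{u_k}{k!}t^k\in\mathbb{R}^n[\![t]\!]$ is a formal Maurer–Cartan element.
   Context: An $L_\infty$-algebra is a sequence $\ell=(\ell_k)_{k\geq0}$ of graded symmetric $k$-linear degree-$1$ maps $\ell_k:V^{\times k}\to V$, $\ell_0=0$, satisfying the $L_\infty$ Jacobi identities; $H^1(V,\ell)=\ker(\ell_1:V_1\to V_2)/\operatorname{im}(\ell_1:V_0\to V_1)$. $\sum_{\vec r_i=m}$ sums over tuples $(r_1,\ldots,r_i)$ of positive integers with sum $m$ and $\binom{k+1}{\vec r_i}=\frac{(k+1)!}{r_1!\cdots r_i!}$. A formal Maurer–Cartan element is a Maurer–Cartan element of $V[\![t]\!]$ with $t$-linearly extended $\ell_k$; for $u[\![t]\!]=\sum\frac{u_k}{k!}t^k$ with $u_0=0$ this means $\ell_1(u_{k+1})+\sum_{i=2}^{k+1}\sum_{\vec r_i=k+1}\binom{k+1}{\vec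 r_i}\frac1{i!}\ell_i(u_{r_1},\ldots,u_{r_i})=0$ for all $k\geq0$. *)

theory Defs
  imports "HOL-Analysis.Analysis" "HOL-Combinatorics.Permutations"
begin

text \<open>
  A graded real vector space is modelled by a family of subspaces V d (d an integer)
  of an ambient real vector space 'v; the graded space is the (external) direct sum of
  the V d.  A homogeneous element is a pair (d, v) with v in V d.  Multilinear maps on
  the direct sum are determined by their values on homogeneous arguments, so the
  brackets are given as functions l k on lists of homogeneous elements; for homogeneous
  arguments of degrees d1..dk the value of the degree-1 map l k lies in V (d1+...+dk+1).
\<close>

definition homog :: "(int \<Rightarrow> 'v::real_vector set) \<Rightarrow> (int \<times> 'v) list \<Rightarrow> bool" where
  "homog V xs \<longleftrightarrow> (\<forall>x\<in>set xs. snd x \<in> V (fst x))"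

definition graded_space :: "(int \<Rightarrow> 'v::real_vector set) \<Rightarrow> bool" where
  "graded_space V \<longleftrightarrow> (\<forall>d. subspace (V d))"

definition finite_dim_components :: "(int \<Rightarrow> 'v::real_vector set) \<Rightarrow> bool" where
  "finite_dim_components V \<longleftrightarrow> (\<forall>d. \<exists>B. finite B \<and> span B = V d)"

text \<open>Koszul sign of the permutation p acting on homogeneous elements xs:
  the permuted tuple is permute_list p xs, i.e. (x_{p 0}, ..., x_{p (k-1)}).\<close>
definition koszul_sign :: "(nat \<Rightarrow> nat) \<Rightarrow> (int \<times> 'v) list \<Rightarrow> real" where
  "koszul_sign p xs =
     (if even (\<Sum>(a, b) \<in> {(a, b). a < b \<and> b < length xs \<and> p b < p a}.
                  fst (xs ! p a) * fst (xs ! p b))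
      then 1 else -1)"

definition unshuffles :: "nat \<Rightarrow> nat \<Rightarrow> (nat \<Rightarrow> nat) set" where
  "unshuffles i n = {\<sigma>. \<sigma> permutes {..<n} \<and>
      (\<forall>a b. a < b \<and> b < i \<longrightarrow> \<sigma> a < \<sigma> b) \<and>
      (\<forall>a b. i \<le> a \<and> a < b \<and> b < n \<longrightarrow> \<sigma> a < \<sigma> b)}"

definition multilinear_bracket ::
  "(int \<Rightarrow> 'v::real_vector set) \<Rightarrow> nat \<Rightarrow> ((int \<times> 'v) list \<Rightarrow> 'v) \<Rightarrow> bool" where
  "multilinear_bracket V k f \<longleftrightarrow>
     (\<forall>xs j d a b c. homog V xs \<and> length xs = k \<and> j < k \<and> fst (xs ! j) = d \<and>
        a \<in> V d \<and> b \<in> V d \<longrightarrow>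
        f (xs[j := (d, c *\<^sub>R a + b)]) = c *\<^sub>R f (xs[j := (d, a)]) + f (xs[j := (d, b)]))"

definition L_infinity_algebra ::
  "(int \<Rightarrow> 'v::real_vector set) \<Rightarrow> (nat \<Rightarrow> (int \<times> 'v) list \<Rightarrow> 'v) \<Rightarrow> bool" where
  "L_infinity_algebra V l \<longleftrightarrow>
     graded_space V \<and>
     l 0 [] = 0 \<and>
     (\<forall>k. multilinear_bracket V k (l k)) \<and>
     (\<forall>k xs. homog V xs \<and> length xs = k \<longrightarrow>
        l k xs \<in> V (sum_list (map fst xs) + 1)) \<and>
     (\<forall>k xs p. homog V xs \<and> length xs = k \<and> p permutes {..<k} \<longrightarrow>
        l k (permute_list p xs) = koszul_sign p xs *\<^sub>R l k xs) \<and>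
     (\<forall>n xs. 1 \<le> n \<and> homog V xs \<and> length xs = n \<longrightarrow>
        (\<Sum>i\<in>{1..n}. \<Sum>\<sigma>\<in>unshuffles i n.
           koszul_sign \<sigma> xs *\<^sub>R
             (let ys = permute_list \<sigma> xs; as = take i ys
              in l (n - i + 1) ((sum_list (map fst as) + 1, l i as) # drop i ys))) = 0)"

definition H1_vanishes ::
  "(int \<Rightarrow> 'v::real_vector set) \<Rightarrow> (nat \<Rightarrow> (int \<times> 'v) list \<Rightarrow> 'v) \<Rightarrow> bool" where
  "H1_vanishes V l \<longleftrightarrow>
     (\<forall>x\<in>V 1. l 1 [(1, x)] = 0 \<longrightarrow> (\<exists>y\<in>V 0. x = l 1 [(0, y)]))"

definition linear_between :: "'v::real_vector set \<Rightarrow> 'v set \<Rightarrow> ('v \<Rightarrow> 'v) \<Rightarrow> bool" where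
  "linear_between A B f \<longleftrightarrow> (\<forall>x\<in>A. f x \<in> B) \<and>
     (\<forall>x\<in>A. \<forall>y\<in>A. \<forall>c. f (c *\<^sub>R x + y) = c *\<^sub>R f x + f y)"

definition compositions :: "nat \<Rightarrow> nat \<Rightarrow> nat list set" where
  "compositions i m = {rs. length rs = i \<and> (\<forall>r\<in>set rs. 0 < r) \<and> sum_list rs = m}"

definition multinom :: "nat \<Rightarrow> nat list \<Rightarrow> real" where
  "multinom m rs = fact m / (\<Prod>r\<leftarrow>rs. fact r)"

definition Obs :: "(nat \<Rightarrow> (int \<times> 'v::real_vector) list \<Rightarrow> 'v) \<Rightarrow> (nat \<Rightarrow> 'v) \<Rightarrow> nat \<Rightarrow> 'v" where
  "Obs l u k = (\<Sum>i\<in>{2..k+1}. \<Sum>rs\<in>compositions i (k+1).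
       (multinom (k+1) rs / fact i) *\<^sub>R l i (map (\<lambda>r. (0, u r)) rs))"

text \<open>u[[t]] = sum_k u_k/k! t^k (coefficient sequence u, with u_0 = 0 and u_k in V_0)
  is a formal Maurer-Cartan element: the equation in V[[t]] unfolds coefficientwise to
  l_1(u_{k+1}) + Obs^k = 0 for all k.\<close>
definition formal_MC ::
  "(int \<Rightarrow> 'v::real_vector set) \<Rightarrow> (nat \<Rightarrow> (int \<times> 'v) list \<Rightarrow> 'v) \<Rightarrow> (nat \<Rightarrow> 'v) \<Rightarrow> bool" where
  "formal_MC V l u \<longleftrightarrow> u 0 = 0 \<and> (\<forall>k. u k \<in> V 0) \<and>
     (\<forall>k. l 1 [(0, u (k + 1))] + Obs l u k = 0)"

end

theory Submission
  imports Defs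
begin

lemma strict_mono_list:
  assumes "\<forall>a b. a < b \<and> b < i \<longrightarrow> (f::nat\<Rightarrow>nat) (a + c) < f (b + c)"
  shows "sorted_wrt (<) (map (\<lambda>x. f (x + c)) [0..<i])"
  using assms by (auto simp: sorted_wrt_map sorted_wrt_iff_nth_less)

lemma shift_img: "i \<le> n \<Longrightarrow> (\<lambda>x. x + i) ` {0..<n-i} = {i..<(n::nat)}"
  by (auto simp: image_iff intro!: bexI[where x="x - i" for x])

lemma unsh_inj:
  assumes s: "\<sigma> \<in> unshuffles i n" and t: "\<tau> \<in> unshuffles i n" and i: "i \<le> n"
    and eq: "\<sigma> ` {..<i} = \<tau> ` {..<i}"
  shows "\<sigma> = \<tau>"
proof -
  have ps: "\<sigma> permutes {..<n}" and pt: "\<tau> permutes {..<n}" using s t by (auto simp: unshuffles_def)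
  have eq2: "\<sigma> ` {i..<n} = \<tau> ` {i..<n}"
  proof -
    have dd: "{..<n} - {..<i} = {i..<n}" by auto
    have "\<sigma> ` {i..<n} = \<sigma> ` {..<n} - \<sigma> ` {..<i}"
      using image_set_diff[OF permutes_inj[OF ps], of "{..<n}" "{..<i}"] dd by simp
    also have "\<dots> = {..<n} - \<sigma> ` {..<i}" using permutes_image[OF ps] by simp
    also have "\<dots> = {..<n} - \<tau> ` {..<i}" using eq by simp
    also have "\<dots> = \<tau> ` {..<n} - \<tau> ` {..<i}" using permutes_image[OF pt] by simp
    also have "\<dots> = \<tau> ` {i..<n}"
      using image_set_diff[OF permutes_inj[OF pt], of "{..<n}" "{..<i}"] dd by simp
    finally show ?thesis .
  qed
  have l1: "map (\<lambda>x. \<sigma> (x + 0)) [0..<i] = map (\<lambda>x. \<tau> (x + 0)) [0..<i]"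
  proof (rule strict_sorted_equal)
    show "sorted_wrt (<) (map (\<lambda>x. \<sigma> (x + 0)) [0..<i])"
      using s by (intro strict_mono_list) (auto simp: unshuffles_def)
    show "sorted_wrt (<) (map (\<lambda>x. \<tau> (x + 0)) [0..<i])"
      using t by (intro strict_mono_list) (auto simp: unshuffles_def)
    show "set (map (\<lambda>x. \<sigma> (x + 0)) [0..<i]) = set (map (\<lambda>x. \<tau> (x + 0)) [0..<i])"
      using eq by (simp add: atLeast0LessThan)
  qed
  have l2: "map (\<lambda>x. \<sigma> (x + i)) [0..<n-i] = map (\<lambda>x. \<tau> (x + i)) [0..<n-i]"
  proof (rule strict_sorted_equal)
    show "sorted_wrt (<) (map (\<lambda>x. \<sigma> (x + i)) [0..<n-i])"
      using s by (intro strict_mono_list) (auto simp: unshuffles_def)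
    show "sorted_wrt (<) (map (\<lambda>x. \<tau> (x + i)) [0..<n-i])"
      using t by (intro strict_mono_list) (auto simp: unshuffles_def)
    have e1: "set (map (\<lambda>x. \<sigma> (x + i)) [0..<n-i]) = \<sigma> ` ((\<lambda>x. x + i) ` {0..<n-i})"
      by (simp only: set_map set_upt image_image)
    have e2: "set (map (\<lambda>x. \<tau> (x + i)) [0..<n-i]) = \<tau> ` ((\<lambda>x. x + i) ` {0..<n-i})"
      by (simp only: set_map set_upt image_image)
    show "set (map (\<lambda>x. \<sigma> (x + i)) [0..<n-i]) = set (map (\<lambda>x. \<tau> (x + i)) [0..<n-i])"
      unfolding e1 e2 shift_img[OF i] using eq2 .
  qed
  show ?thesis
  proof
    fix x
    show "\<sigma> x = \<tau> x"
    proof (cases "x < i")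
      case True then show ?thesis using l1 by (simp add: list_eq_iff_nth_eq)
    next
      case False
      show ?thesis
      proof (cases "x < n")
        case True
        with False have "x - i < n - i" by simp
        then have "\<sigma> (x - i + i) = \<tau> (x - i + i)" using l2 by (simp add: list_eq_iff_nth_eq)
        then show ?thesis using False by simp
      next
        case c: False
        then show ?thesis using permutes_not_in[OF ps] permutes_not_in[OF pt] by simp
      qed
    qed
  qed
qed

lemma unsh_surj:
  assumes S: "S \<subseteq> {..<n}" and c: "card S = i"
  shows "\<exists>\<sigma>\<in>unshuffles i n. \<sigma> ` {..<i} = S"
proof -
  define L1 where "L1 = sorted_list_of_set S"
  define L2 where "L2 = sorted_list_of_set ({..<n} - S)"
  define L where "L = L1 @ L2"
  define \<sigma> where "\<sigma> x = (if x < n then L ! x else x)" for x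
  have fS: "finite S" using S finite_subset by blast
  have len1: "length L1 = i" using c fS by (simp add: L1_def)
  have len2: "length L2 = n - i" using c S fS by (simp add: L2_def card_Diff_subset)
  have iln: "i \<le> n" using c S by (metis card_lessThan card_mono finite_lessThan)
  have lenL: "length L = n" using len1 len2 iln by (simp add: L_def)
  have s1: "sorted_wrt (<) L1" by (simp add: L1_def)
  have s2: "sorted_wrt (<) L2" by (simp add: L2_def)
  have set1: "set L1 = S" using fS by (simp add: L1_def)
  have set2: "set L2 = {..<n} - S" by (simp add: L2_def)
  have dL: "distinct L" using s1 s2 set1 set2 by (auto simp: L_def strict_sorted_iff)
  have setL: "set L = {..<n}" using set1 set2 S by (auto simp: L_def)
  have bij: "bij_betw \<sigma> {..<n} {..<n}"
    unfolding bij_betw_def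
  proof
    show "inj_on \<sigma> {..<n}" using dL lenL by (auto simp: inj_on_def \<sigma>_def nth_eq_iff_index_eq)
    show "\<sigma> ` {..<n} = {..<n}"
    proof -
      have "\<sigma> ` {..<n} = (\<lambda>x. L ! x) ` {..<n}" by (simp add: \<sigma>_def)
      also have "\<dots> = set L" using lenL by (auto simp: set_conv_nth)
      finally show ?thesis using setL by simp
    qed
  qed
  have perm: "\<sigma> permutes {..<n}" by (rule bij_imp_permutes[OF bij]) (simp add: \<sigma>_def)
  have m1: "\<forall>a b. a < b \<and> b < i \<longrightarrow> \<sigma> a < \<sigma> b"
    using s1 len1 iln by (auto simp: \<sigma>_def L_def nth_append sorted_wrt_iff_nth_less)
  have m2: "\<forall>a b. i \<le> a \<and> a < b \<and> b < n \<longrightarrow> \<sigma> a < \<sigma> b"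
  proof (intro allI impI)
    fix a b assume ab: "i \<le> a \<and> a < b \<and> b < n"
    then have "L2 ! (a - i) < L2 ! (b - i)"
      using s2 len2 sorted_wrt_nth_less[of "(<)" L2 "a - i" "b - i"] by auto
    then show "\<sigma> a < \<sigma> b" using ab len1 by (simp add: \<sigma>_def L_def nth_append)
  qed
  have im: "\<sigma> ` {..<i} = S"
  proof -
    have "\<sigma> ` {..<i} = (\<lambda>x. L1 ! x) ` {..<i}"
      using iln len1 by (auto simp: \<sigma>_def L_def nth_append intro!: image_cong)
    also have "\<dots> = set L1" using len1 by (auto simp: set_conv_nth)
    finally show ?thesis using set1 by simp
  qed
  show ?thesis unfolding unshuffles_def using perm m1 m2 im by blast
qed

lemma finite_unsh: "finite (unshuffles i n)"
  by (rule finite_subset[OF _ finite_permutations[of "{..<n}"]]) (auto simp: unshuffles_def)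

lemma card_unsh:
  assumes "i \<le> n" shows "card (unshuffles i n) = n choose i"
proof -
  have "bij_betw (\<lambda>\<sigma>. \<sigma> ` {..<i}) (unshuffles i n) {B. B \<subseteq> {..<n} \<and> card B = i}"
  proof (rule bij_betw_imageI)
    show "inj_on (\<lambda>\<sigma>. \<sigma> ` {..<i}) (unshuffles i n)"
    proof (rule inj_onI)
      fix \<sigma> \<tau> assume "\<sigma> \<in> unshuffles i n" "\<tau> \<in> unshuffles i n" "\<sigma> ` {..<i} = \<tau> ` {..<i}"
      then show "\<sigma> = \<tau>" using unsh_inj[OF _ _ assms] by blast
    qed
    show "(\<lambda>\<sigma>. \<sigma> ` {..<i}) ` unshuffles i n = {B. B \<subseteq> {..<n} \<and> card B = i}"
    proof
      show "(\<lambda>\<sigma>. \<sigma> ` {..<i}) ` unshuffles i n \<subseteq> {B. B \<subseteq> {..<n} \<and> card B = i}"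
      proof clarify
        fix \<sigma> assume s: "\<sigma> \<in> unshuffles i n"
        then have p: "\<sigma> permutes {..<n}" by (simp add: unshuffles_def)
        have "\<sigma> ` {..<i} \<subseteq> {..<n}" using assms permutes_in_image[OF p] image_subset_iff by (metis lessThan_iff order_less_le_trans)
        moreover have "card (\<sigma> ` {..<i}) = i"
        proof -
          have "inj_on \<sigma> {..<i}" using permutes_inj[OF p] by (simp add: inj_on_def inj_def)
          then show ?thesis by (simp add: card_image)
        qed
        ultimately show "\<sigma> ` {..<i} \<subseteq> {..<n} \<and> card (\<sigma> ` {..<i}) = i" by simp
      qed
      show "{B. B \<subseteq> {..<n} \<and> card B = i} \<subseteq> (\<lambda>\<sigma>. \<sigma> ` {..<i}) ` unshuffles i n"
        proof
        fix B assume "B \<in> {B. B \<subseteq> {..<n} \<and> card B = i}"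
        then obtain \<sigma> where "\<sigma> \<in> unshuffles i n" "\<sigma> ` {..<i} = B" using unsh_surj by blast
        then show "B \<in> (\<lambda>\<sigma>. \<sigma> ` {..<i}) ` unshuffles i n" by blast
      qed
    qed
  qed
  then have "card (unshuffles i n) = card {B. B \<subseteq> {..<n} \<and> card B = i}" by (rule bij_betw_same_card)
  then show ?thesis using n_subsets[of "{..<n}" i] by simp
qed

definition Pos :: "nat \<Rightarrow> nat list set" where
  "Pos a = {ps. ps \<noteq> [] \<and> (\<forall>r\<in>set ps. 0 < r) \<and> sum_list ps = a}"

lemma len_le_sum: "(\<forall>r\<in>set ps. 0 < r) \<Longrightarrow> length ps \<le> sum_list (ps::nat list)"
  by (induction ps) auto

lemma finite_Pos: "finite (Pos a)"
proof (rule finite_subset[OF _ finite_lists_length_le[of "{..a}" a]])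
  show "Pos a \<subseteq> {xs. set xs \<subseteq> {..a} \<and> length xs \<le> a}"
    using len_le_sum member_le_sum_list by (fastforce simp: Pos_def)
qed simp

lemma finite_comp: "finite (compositions i a)"
proof (rule finite_subset[OF _ finite_lists_length_le[of "{..a}" i]])
  show "compositions i a \<subseteq> {xs. set xs \<subseteq> {..a} \<and> length xs \<le> i}"
    using member_le_sum_list by (fastforce simp: compositions_def)
qed simp

lemma Pos_UN: "Pos a = (\<Union>i\<in>{1..a}. compositions i a)"
proof
  show "Pos a \<subseteq> (\<Union>i\<in>{1..a}. compositions i a)"
  proof
    fix ps assume p: "ps \<in> Pos a"
    then have "length ps \<in> {1..a}" using len_le_sum[of ps] by (auto simp: Pos_def Suc_le_eq)
    with p show "ps \<in> (\<Union>i\<in>{1..a}. compositions i a)" by (auto simp: Pos_def compositions_def)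
  qed
  show "(\<Union>i\<in>{1..a}. compositions i a) \<subseteq> Pos a"
    by (auto simp: Pos_def compositions_def)
qed

lemma Pos_sum: "(\<Sum>ps\<in>Pos a. f ps) = (\<Sum>i\<in>{1..a}. \<Sum>ps\<in>compositions i a. f ps)"
  unfolding Pos_UN
  by (rule sum.UNION_disjoint) (simp_all add: finite_comp, auto simp: compositions_def)

lemma comp_1: "1 \<le> a \<Longrightarrow> compositions 1 a = {[a]}"
  by (auto simp: compositions_def length_Suc_conv)

lemma perm_inv_list:
  assumes "\<sigma> permutes {..<length xs}"
  shows "permute_list (inv \<sigma>) (permute_list \<sigma> xs) = xs"
proof -
  have "permute_list (inv \<sigma>) (permute_list \<sigma> xs) = permute_list (\<sigma> \<circ> inv \<sigma>) xs"
    using permute_list_compose[OF permutes_inv[OF assms], of \<sigma>] by simp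
  also have "\<sigma> \<circ> inv \<sigma> = id" using permutes_inv_o(1)[OF assms] .
  finally show ?thesis by simp
qed

lemma prod_fact_pos: "(\<Prod>r\<leftarrow>rs. fact r :: real) > 0"
  by (induction rs) auto

lemma perm_prod: "\<sigma> permutes {..<length xs} \<Longrightarrow>
   (\<Prod>r\<leftarrow>permute_list \<sigma> xs. f r) = (\<Prod>r\<leftarrow>xs. (f r :: 'a::comm_monoid_mult))"
  by (metis mset_map mset_permute_list prod_mset_prod_list)

lemma perm_sum: "\<sigma> permutes {..<length xs} \<Longrightarrow>
   sum_list (permute_list \<sigma> xs) = sum_list (xs :: nat list)"
  by (metis mset_permute_list sum_mset_sum_list)

lemma perm_comp:
  assumes "\<sigma> permutes {..<n}" "rs \<in> compositions n m"
  shows "permute_list \<sigma> rs \<in> compositions n m"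
  using assms perm_sum[of \<sigma> rs] by (auto simp: compositions_def)

lemma sum_perm_comp:
  assumes p: "\<sigma> permutes {..<n}"
  shows "(\<Sum>rs\<in>compositions n m. h (permute_list \<sigma> rs)) = (\<Sum>rs\<in>compositions n m. h rs)"
proof (rule sum.reindex_bij_witness[where i="permute_list (inv \<sigma>)" and j="permute_list \<sigma>"])
  fix a assume a: "a \<in> compositions n m"
  then have la: "length a = n" by (simp add: compositions_def)
  show "permute_list (inv \<sigma>) (permute_list \<sigma> a) = a" using perm_inv_list[of \<sigma> a] p la by simp
  show "permute_list \<sigma> a \<in> compositions n m" using perm_comp[OF p a] .
next
  fix b assume b: "b \<in> compositions n m"
  then have lb: "length b = n" by (simp add: compositions_def)
  have pi: "inv \<sigma> permutes {..<n}" using permutes_inv[OF p] .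
  have "permute_list \<sigma> (permute_list (inv \<sigma>) b) = permute_list (inv (inv \<sigma>)) (permute_list (inv \<sigma>) b)"
    using inv_inv_eq[OF permutes_bij[OF p]] by simp
  also have "\<dots> = b" using perm_inv_list[of "inv \<sigma>" b] pi lb by simp
  finally show "permute_list \<sigma> (permute_list (inv \<sigma>) b) = b" .
  show "permute_list (inv \<sigma>) b \<in> compositions n m" using perm_comp[OF pi b] .
qed simp

lemma multinom_perm:
  assumes "\<sigma> permutes {..<length rs}"
  shows "multinom m (permute_list \<sigma> rs) = multinom m rs"
  using perm_prod[OF assms, of fact] by (simp add: multinom_def)

definition UL :: "(nat \<Rightarrow> 'v) \<Rightarrow> nat list \<Rightarrow> (int \<times> 'v) list" where
  "UL u rs = map (\<lambda>r. (0, u r)) rs"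

definition GJ :: "(nat \<Rightarrow> (int \<times> 'v) list \<Rightarrow> 'v) \<Rightarrow> (nat \<Rightarrow> 'v) \<Rightarrow> nat \<Rightarrow> nat list \<Rightarrow> 'v" where
  "GJ l u i rs = l (length rs - i + 1) ((1, l i (UL u (take i rs))) # UL u (drop i rs))"

definition AA :: "(nat \<Rightarrow> (int \<times> 'v::real_vector) list \<Rightarrow> 'v) \<Rightarrow> (nat \<Rightarrow> 'v) \<Rightarrow> nat \<Rightarrow> 'v" where
  "AA l u a = (\<Sum>ps\<in>Pos a. (multinom a ps / fact (length ps)) *\<^sub>R l (length ps) (UL u ps))"

lemma koszul_zero:
  assumes "\<forall>x\<in>set xs. fst x = 0" "\<sigma> permutes {..<length xs}"
  shows "koszul_sign \<sigma> xs = 1"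
proof -
  have "(\<Sum>(a, b) \<in> {(a, b). a < b \<and> b < length xs \<and> \<sigma> b < \<sigma> a}.
                  fst (xs ! \<sigma> a) * fst (xs ! \<sigma> b)) = 0"
  proof (rule sum.neutral, clarify)
    fix a b assume "a < b" "b < length xs"
    then have "\<sigma> a < length xs" using permutes_in_image[OF assms(2)] by simp
    then have "fst (xs ! \<sigma> a) = 0" using assms(1) nth_mem by blast
    then show "fst (xs ! \<sigma> a) * fst (xs ! \<sigma> b) = 0" by simp
  qed
  then show ?thesis by (simp add: koszul_sign_def)
qed

locale linf =
  fixes V :: "int \<Rightarrow> 'v::real_vector set" and l :: "nat \<Rightarrow> (int \<times> 'v) list \<Rightarrow> 'v"
    and u :: "nat \<Rightarrow> 'v"
  assumes Linf: "L_infinity_algebra V l" and uV: "\<And>k. u k \<in> V 0"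
begin

lemma sub: "subspace (V d)" using Linf by (simp add: L_infinity_algebra_def graded_space_def)

lemma deg_ax: "homog V xs \<Longrightarrow> length xs = k \<Longrightarrow> l k xs \<in> V (sum_list (map fst xs) + 1)"
  using Linf unfolding L_infinity_algebra_def by blast

lemma jac_ax: "1 \<le> n \<Longrightarrow> homog V xs \<Longrightarrow> length xs = n \<Longrightarrow>
        (\<Sum>i\<in>{1..n}. \<Sum>\<sigma>\<in>unshuffles i n.
           koszul_sign \<sigma> xs *\<^sub>R
             (let ys = permute_list \<sigma> xs; as = take i ys
              in l (n - i + 1) ((sum_list (map fst as) + 1, l i as) # drop i ys))) = 0"
  using Linf unfolding L_infinity_algebra_def by blast

lemma homU: "homog V (UL u rs)" by (auto simp: homog_def UL_def uV)

lemma lengthU[simp]: "length (UL u rs) = length rs" by (simp add: UL_def)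

lemma sumU[simp]: "sum_list (map fst (UL u rs)) = 0" by (induction rs) (auto simp: UL_def)

lemma degU: "length rs = k \<Longrightarrow> l k (UL u rs) \<in> V 1"
  using deg_ax[OF homU[of rs], of k] by simp

lemma lin1:
  assumes "a \<in> V 1" "b \<in> V 1" "homog V ys"
  shows "l (Suc (length ys)) ((1, c *\<^sub>R a + b) # ys) =
         c *\<^sub>R l (Suc (length ys)) ((1, a) # ys) + l (Suc (length ys)) ((1, b) # ys)"
proof -
  have mb: "multilinear_bracket V (Suc (length ys)) (l (Suc (length ys)))"
    using Linf by (simp add: L_infinity_algebra_def)
  have h: "homog V ((1, a) # ys)" using assms by (simp add: homog_def)
  show ?thesis using mb[unfolded multilinear_bracket_def, rule_format, of "(1, a) # ys" 0 1 a b c] h assms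
    by simp
qed

lemma lin_zero: "homog V ys \<Longrightarrow> l (Suc (length ys)) ((1, 0) # ys) = 0"
  using lin1[of 0 0 ys 1] subspace_0[OF sub] by simp

lemma lin_scale: "a \<in> V 1 \<Longrightarrow> homog V ys \<Longrightarrow>
   l (Suc (length ys)) ((1, c *\<^sub>R a) # ys) = c *\<^sub>R l (Suc (length ys)) ((1, a) # ys)"
  using lin1[of a 0 ys c] subspace_0[OF sub] lin_zero by simp

lemma lin_add: "a \<in> V 1 \<Longrightarrow> b \<in> V 1 \<Longrightarrow> homog V ys \<Longrightarrow>
   l (Suc (length ys)) ((1, a + b) # ys) = l (Suc (length ys)) ((1, a) # ys) + l (Suc (length ys)) ((1, b) # ys)"
  using lin1[of a b ys 1] by simp

lemma lin_sum:
  assumes "finite F" "\<forall>x\<in>F. v x \<in> V 1" "homog V ys"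
  shows "l (Suc (length ys)) ((1, \<Sum>x\<in>F. v x) # ys) = (\<Sum>x\<in>F. l (Suc (length ys)) ((1, v x) # ys))"
  using assms
proof (induction F rule: finite_induct)
  case empty then show ?case using lin_zero[of ys] by simp
next
  case (insert x F)
  have "(\<Sum>x\<in>F. v x) \<in> V 1" using insert.prems subspace_sum[OF sub[of 1], of F v] by simp
  then show ?case using insert lin_add[of "v x" "\<Sum>x\<in>F. v x" ys] by simp
qed

lemma jac:
  assumes ne: "rs \<noteq> []"
  shows "(\<Sum>i\<in>{1..length rs}. \<Sum>\<sigma>\<in>unshuffles i (length rs). GJ l u i (permute_list \<sigma> rs)) = 0"
proof -
  let ?n = "length rs"
  let ?xs = "UL u rs"
  have J: "(\<Sum>i\<in>{1..?n}. \<Sum>\<sigma>\<in>unshuffles i ?n.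
           koszul_sign \<sigma> ?xs *\<^sub>R
             (let ys = permute_list \<sigma> ?xs; as = take i ys
              in l (?n - i + 1) ((sum_list (map fst as) + 1, l i as) # drop i ys))) = 0"
    using jac_ax[OF _ homU, of ?n rs] ne by (simp add: Suc_le_eq)
  have z: "sum_list (map (\<lambda>r. 0::int) xs) = 0" for xs :: "nat list" by (induction xs) auto
  have eq: "GJ l u i (permute_list \<sigma> rs) = koszul_sign \<sigma> ?xs *\<^sub>R
             (let ys = permute_list \<sigma> ?xs; as = take i ys
              in l (?n - i + 1) ((sum_list (map fst as) + 1, l i as) # drop i ys))"
    if "\<sigma> \<in> unshuffles i ?n" for i \<sigma>
  proof -
    have p: "\<sigma> permutes {..<length rs}" using that by (simp add: unshuffles_def)
    have p': "\<sigma> permutes {..<length ?xs}" using p by simp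
    have ks: "koszul_sign \<sigma> ?xs = 1" by (rule koszul_zero[OF _ p']) (auto simp: UL_def)
    have pl: "permute_list \<sigma> ?xs = UL u (permute_list \<sigma> rs)"
      using permute_list_map[OF p] by (simp add: UL_def)
    have tk: "take i (UL u xs) = UL u (take i xs)" "drop i (UL u xs) = UL u (drop i xs)" for xs
      by (simp_all add: UL_def take_map drop_map)
    show ?thesis
      unfolding ks pl Let_def GJ_def tk sumU by simp
  qed
  have "(\<Sum>i\<in>{1..length rs}. \<Sum>\<sigma>\<in>unshuffles i (length rs). GJ l u i (permute_list \<sigma> rs)) =
     (\<Sum>i\<in>{1..?n}. \<Sum>\<sigma>\<in>unshuffles i ?n.
           koszul_sign \<sigma> ?xs *\<^sub>R
             (let ys = permute_list \<sigma> ?xs; as = take i ys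
              in l (?n - i + 1) ((sum_list (map fst as) + 1, l i as) # drop i ys)))"
    by (rule sum.cong[OF refl], rule sum.cong[OF refl], rule eq)
  then show ?thesis using J by simp
qed

end

lemma scal:
  fixes ps qs :: "nat list"
  shows "real ((i + j) choose i) * (multinom m (ps @ qs) / fact (i + j)) =
    fact m / (fact a * fact j * (\<Prod>r\<leftarrow>qs. fact r)) * (multinom a ps / fact i)"
proof -
  have b: "real ((i + j) choose i) = fact (i + j) / (fact i * fact j)"
    using binomial_fact[of i "i + j"] by simp
  have p1: "(\<Prod>r\<leftarrow>ps. fact r :: real) > 0" "(\<Prod>r\<leftarrow>qs. fact r :: real) > 0"
    using prod_fact_pos by auto
  have "(fact a :: real) > 0" "(fact i :: real) > 0" "(fact j :: real) > 0" "(fact (i + j) :: real) > 0"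
    by auto
  then show ?thesis using p1 unfolding b multinom_def
    by (simp add: field_simps)
qed

lemma finite_Q: "finite {qs. (\<forall>r\<in>set qs. 0 < r) \<and> sum_list qs < (m::nat)}"
proof (rule finite_subset[OF _ finite_lists_length_le[of "{..m}" m]])
  show "{qs. (\<forall>r\<in>set qs. 0 < r) \<and> sum_list qs < m} \<subseteq> {xs. set xs \<subseteq> {..m} \<and> length xs \<le> m}"
    using len_le_sum member_le_sum_list by (fastforce intro: order.trans)
qed simp

lemma sigma_reindex:
  fixes K :: "nat list \<Rightarrow> nat \<Rightarrow> 'a::comm_monoid_add"
  shows "(\<Sum>rs\<in>Pos m. \<Sum>i\<in>{1..length rs}. K rs i) =
    (\<Sum>qs\<in>{qs. (\<forall>r\<in>set qs. 0 < r) \<and> sum_list qs < m}. \<Sum>ps\<in>Pos (m - sum_list qs). K (ps @ qs) (length ps))"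
proof -
  let ?Q = "{qs. (\<forall>r\<in>set qs. 0 < r) \<and> sum_list qs < m}"
  have "(\<Sum>rs\<in>Pos m. \<Sum>i\<in>{1..length rs}. K rs i) = (\<Sum>(rs, i)\<in>(SIGMA rs:Pos m. {1..length rs}). K rs i)"
    by (rule sum.Sigma) (auto simp: finite_Pos)
  also have "\<dots> = (\<Sum>(qs, ps)\<in>(SIGMA qs:?Q. Pos (m - sum_list qs)). K (ps @ qs) (length ps))"
  proof (rule sum.reindex_bij_witness[where i="\<lambda>(qs, ps). (ps @ qs, length ps)" and j="\<lambda>(rs, i). (drop i rs, take i rs)"])
    fix a assume "a \<in> (SIGMA rs:Pos m. {1..length rs})"
    then obtain rs i where a: "a = (rs, i)" "rs \<in> Pos m" "1 \<le> i" "i \<le> length rs" by auto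
    then show "(case case a of (rs, i) \<Rightarrow> (drop i rs, take i rs) of (qs, ps) \<Rightarrow> (ps @ qs, length ps)) = a"
      by (simp add: min_def)
    have pos: "\<forall>r\<in>set rs. 0 < r" and sm: "sum_list rs = m" and ne: "rs \<noteq> []" using a by (auto simp: Pos_def)
    have "take i rs \<noteq> []" using a ne by simp
    moreover have pt: "\<forall>r\<in>set (take i rs). 0 < r" using pos by (meson in_set_takeD)
    ultimately have st: "1 \<le> sum_list (take i rs)" using len_le_sum[of "take i rs"]
      by (metis One_nat_def Suc_leI dual_order.trans length_greater_0_conv)
    have sp: "sum_list (take i rs) + sum_list (drop i rs) = m"
      using sm by (metis sum_list_append append_take_drop_id)
    have pd: "\<forall>r\<in>set (drop i rs). 0 < r" using pos by (meson in_set_dropD)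
    show "(case a of (rs, i) \<Rightarrow> (drop i rs, take i rs)) \<in> (SIGMA qs:?Q. Pos (m - sum_list qs))"
      using a(1) st sp pd pt \<open>take i rs \<noteq> []\<close> by (auto simp: Pos_def)
    show "(case case a of (rs, i) \<Rightarrow> (drop i rs, take i rs) of (qs, ps) \<Rightarrow> K (ps @ qs) (length ps)) =
          (case a of (rs, i) \<Rightarrow> K rs i)"
      using a by (simp add: min_def)
  next
    fix b assume "b \<in> (SIGMA qs:?Q. Pos (m - sum_list qs))"
    then obtain qs ps where b: "b = (qs, ps)" "qs \<in> ?Q" "ps \<in> Pos (m - sum_list qs)" by auto
    then show "(case case b of (qs, ps) \<Rightarrow> (ps @ qs, length ps) of (rs, i) \<Rightarrow> (drop i rs, take i rs)) = b"
      by simp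
    have "ps \<noteq> []" using b by (simp add: Pos_def)
    then show "(case b of (qs, ps) \<Rightarrow> (ps @ qs, length ps)) \<in> (SIGMA rs:Pos m. {1..length rs})"
      using b by (auto simp: Pos_def Suc_le_eq)
  qed
  also have "\<dots> = (\<Sum>qs\<in>?Q. \<Sum>ps\<in>Pos (m - sum_list qs). K (ps @ qs) (length ps))"
    by (rule sum.Sigma[symmetric]) (auto simp: finite_Pos finite_Q)
  finally show ?thesis .
qed

context linf begin

lemma inner_qs:
  assumes qQ: "sum_list qs < m" "\<forall>r\<in>set qs. 0 < r"
  shows "(\<Sum>ps\<in>Pos (m - sum_list qs).
            (real (length (ps @ qs) choose length ps) * (multinom m (ps @ qs) / fact (length (ps @ qs))))
              *\<^sub>R GJ l u (length ps) (ps @ qs)) =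
         (fact m / (fact (m - sum_list qs) * fact (length qs) * (\<Prod>r\<leftarrow>qs. fact r))) *\<^sub>R
            l (Suc (length (UL u qs))) ((1, AA l u (m - sum_list qs)) # UL u qs)"
proof -
  define a where "a = m - sum_list qs"
  define c where "c = fact m / (fact a * fact (length qs) * (\<Prod>r\<leftarrow>qs. fact r :: real))"
  define \<alpha> where "\<alpha> ps = multinom a ps / fact (length ps)" for ps
  define v where "v ps = l (length ps) (UL u ps)" for ps
  have vV: "v ps \<in> V 1" for ps unfolding v_def by (rule degU) simp
  have hq: "homog V (UL u qs)" by (rule homU)
  have "(\<Sum>ps\<in>Pos a.
            (real (length (ps @ qs) choose length ps) * (multinom m (ps @ qs) / fact (length (ps @ qs))))
              *\<^sub>R GJ l u (length ps) (ps @ qs)) =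
        (\<Sum>ps\<in>Pos a. c *\<^sub>R l (Suc (length (UL u qs))) ((1, \<alpha> ps *\<^sub>R v ps) # UL u qs))"
  proof (rule sum.cong[OF refl])
    fix ps assume "ps \<in> Pos a"
    have g: "GJ l u (length ps) (ps @ qs) = l (Suc (length (UL u qs))) ((1, v ps) # UL u qs)"
      by (simp add: GJ_def v_def)
    have sc: "real (length (ps @ qs) choose length ps) * (multinom m (ps @ qs) / fact (length (ps @ qs)))
        = c * \<alpha> ps"
      using scal[of "length ps" "length qs" m ps qs a] by (simp add: c_def \<alpha>_def)
    show "(real (length (ps @ qs) choose length ps) * (multinom m (ps @ qs) / fact (length (ps @ qs))))
              *\<^sub>R GJ l u (length ps) (ps @ qs) =
          c *\<^sub>R l (Suc (length (UL u qs))) ((1, \<alpha> ps *\<^sub>R v ps) # UL u qs)"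
      unfolding g sc lin_scale[OF vV hq] by simp
  qed
  also have "\<dots> = c *\<^sub>R (\<Sum>ps\<in>Pos a. l (Suc (length (UL u qs))) ((1, \<alpha> ps *\<^sub>R v ps) # UL u qs))"
    by (simp add: scaleR_sum_right)
  also have "\<dots> = c *\<^sub>R l (Suc (length (UL u qs))) ((1, \<Sum>ps\<in>Pos a. \<alpha> ps *\<^sub>R v ps) # UL u qs)"
    using lin_sum[where v="\<lambda>ps. \<alpha> ps *\<^sub>R v ps" and F="Pos a" and ys="UL u qs"] finite_Pos hq
      subspace_scale[OF sub vV] by simp
  also have "(\<Sum>ps\<in>Pos a. \<alpha> ps *\<^sub>R v ps) = AA l u a"
    by (simp add: AA_def \<alpha>_def v_def)
  finally show ?thesis by (simp add: a_def c_def)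
qed

lemma main:
  assumes m1: "1 \<le> m" and IH: "\<And>a. 1 \<le> a \<Longrightarrow> a < m \<Longrightarrow> AA l u a = 0"
  shows "l 1 [(1, AA l u m)] = 0"
proof -
  define w where "w rs = multinom m rs / fact (length rs)" for rs
  define K where "K rs i = (real (length rs choose i) * w rs) *\<^sub>R GJ l u i rs" for rs i
  let ?Q = "{qs. (\<forall>r\<in>set qs. 0 < r) \<and> sum_list qs < m}"
  have s1: "(\<Sum>n\<in>{1..m}. \<Sum>rs\<in>compositions n m.
      w rs *\<^sub>R (\<Sum>i\<in>{1..n}. \<Sum>\<sigma>\<in>unshuffles i n. GJ l u i (permute_list \<sigma> rs))) = 0"
  proof (intro sum.neutral ballI)
    fix n rs assume n: "n \<in> {1..m}" and rs: "rs \<in> compositions n m"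
    then have ln: "length rs = n" and ne: "rs \<noteq> []" by (auto simp: compositions_def)
    show "w rs *\<^sub>R (\<Sum>i\<in>{1..n}. \<Sum>\<sigma>\<in>unshuffles i n. GJ l u i (permute_list \<sigma> rs)) = 0"
      using jac[OF ne] ln by simp
  qed
  have s2: "(\<Sum>rs\<in>compositions n m.
      w rs *\<^sub>R (\<Sum>i\<in>{1..n}. \<Sum>\<sigma>\<in>unshuffles i n. GJ l u i (permute_list \<sigma> rs))) =
      (\<Sum>rs\<in>compositions n m. \<Sum>i\<in>{1..length rs}. K rs i)" if n: "n \<in> {1..m}" for n
  proof -
    have "(\<Sum>rs\<in>compositions n m.
      w rs *\<^sub>R (\<Sum>i\<in>{1..n}. \<Sum>\<sigma>\<in>unshuffles i n. GJ l u i (permute_list \<sigma> rs))) =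
      (\<Sum>rs\<in>compositions n m. \<Sum>i\<in>{1..n}. \<Sum>\<sigma>\<in>unshuffles i n. w rs *\<^sub>R GJ l u i (permute_list \<sigma> rs))"
      by (simp add: scaleR_sum_right)
    also have "\<dots> = (\<Sum>i\<in>{1..n}. \<Sum>rs\<in>compositions n m. \<Sum>\<sigma>\<in>unshuffles i n. w rs *\<^sub>R GJ l u i (permute_list \<sigma> rs))"
      by (rule sum.swap)
    also have "\<dots> = (\<Sum>i\<in>{1..n}. \<Sum>\<sigma>\<in>unshuffles i n. \<Sum>rs\<in>compositions n m. w rs *\<^sub>R GJ l u i (permute_list \<sigma> rs))"
      by (rule sum.cong[OF refl], rule sum.swap)
    also have "\<dots> = (\<Sum>i\<in>{1..n}. \<Sum>\<sigma>\<in>unshuffles i n. \<Sum>rs\<in>compositions n m. w rs *\<^sub>R GJ l u i rs)"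
    proof (rule sum.cong[OF refl], rule sum.cong[OF refl])
      fix i \<sigma> assume "\<sigma> \<in> unshuffles i n"
      then have p: "\<sigma> permutes {..<n}" by (simp add: unshuffles_def)
      have "(\<Sum>rs\<in>compositions n m. w rs *\<^sub>R GJ l u i (permute_list \<sigma> rs)) =
            (\<Sum>rs\<in>compositions n m. w (permute_list \<sigma> rs) *\<^sub>R GJ l u i (permute_list \<sigma> rs))"
      proof (rule sum.cong[OF refl])
        fix rs assume "rs \<in> compositions n m"
        then have "\<sigma> permutes {..<length rs}" using p by (simp add: compositions_def)
        then show "w rs *\<^sub>R GJ l u i (permute_list \<sigma> rs) = w (permute_list \<sigma> rs) *\<^sub>R GJ l u i (permute_list \<sigma> rs)"
          by (simp add: w_def multinom_perm)
      qed
      also have "\<dots> = (\<Sum>rs\<in>compositions n m. w rs *\<^sub>R GJ l u i rs)"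
        by (rule sum_perm_comp[OF p])
      finally show "(\<Sum>rs\<in>compositions n m. w rs *\<^sub>R GJ l u i (permute_list \<sigma> rs)) =
            (\<Sum>rs\<in>compositions n m. w rs *\<^sub>R GJ l u i rs)" .
    qed
    also have "\<dots> = (\<Sum>i\<in>{1..n}. real (n choose i) *\<^sub>R (\<Sum>rs\<in>compositions n m. w rs *\<^sub>R GJ l u i rs))"
    proof (rule sum.cong[OF refl])
      fix i assume "i \<in> {1..n}"
      then show "(\<Sum>\<sigma>\<in>unshuffles i n. \<Sum>rs\<in>compositions n m. w rs *\<^sub>R GJ l u i rs) =
         real (n choose i) *\<^sub>R (\<Sum>rs\<in>compositions n m. w rs *\<^sub>R GJ l u i rs)"
        by (simp add: sum_constant_scaleR card_unsh)
    qed
    also have "\<dots> = (\<Sum>i\<in>{1..n}. \<Sum>rs\<in>compositions n m. K rs i)"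
    proof (rule sum.cong[OF refl])
      fix i assume "i \<in> {1..n}"
      show "real (n choose i) *\<^sub>R (\<Sum>rs\<in>compositions n m. w rs *\<^sub>R GJ l u i rs) =
            (\<Sum>rs\<in>compositions n m. K rs i)"
        unfolding scaleR_sum_right
        by (rule sum.cong[OF refl]) (simp add: K_def compositions_def)
    qed
    also have "\<dots> = (\<Sum>rs\<in>compositions n m. \<Sum>i\<in>{1..n}. K rs i)"
      by (rule sum.swap)
    also have "\<dots> = (\<Sum>rs\<in>compositions n m. \<Sum>i\<in>{1..length rs}. K rs i)"
      by (rule sum.cong[OF refl]) (simp add: compositions_def)
    finally show ?thesis .
  qed
  have "0 = (\<Sum>n\<in>{1..m}. \<Sum>rs\<in>compositions n m. \<Sum>i\<in>{1..length rs}. K rs i)"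
    using s1 s2 by simp
  also have "\<dots> = (\<Sum>rs\<in>Pos m. \<Sum>i\<in>{1..length rs}. K rs i)"
    by (rule Pos_sum[symmetric])
  also have "\<dots> = (\<Sum>qs\<in>?Q. \<Sum>ps\<in>Pos (m - sum_list qs). K (ps @ qs) (length ps))"
    by (rule sigma_reindex)
  also have "\<dots> = (\<Sum>qs\<in>?Q. if qs = [] then l 1 [(1, AA l u m)] else 0)"
  proof (rule sum.cong[OF refl])
    fix qs assume q: "qs \<in> ?Q"
    have I: "(\<Sum>ps\<in>Pos (m - sum_list qs). K (ps @ qs) (length ps)) =
         (fact m / (fact (m - sum_list qs) * fact (length qs) * (\<Prod>r\<leftarrow>qs. fact r))) *\<^sub>R
            l (Suc (length (UL u qs))) ((1, AA l u (m - sum_list qs)) # UL u qs)"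
      unfolding K_def w_def using inner_qs[of qs m] q by simp
    show "(\<Sum>ps\<in>Pos (m - sum_list qs). K (ps @ qs) (length ps)) = (if qs = [] then l 1 [(1, AA l u m)] else 0)"
    proof (cases "qs = []")
      case True
      then show ?thesis using I by (simp add: UL_def)
    next
      case False
      have pos: "\<forall>r\<in>set qs. 0 < r" and lt: "sum_list qs < m" using q by auto
      have "1 \<le> sum_list qs" using len_le_sum[OF pos] False
        by (metis One_nat_def Suc_leI dual_order.trans length_greater_0_conv)
      then have "AA l u (m - sum_list qs) = 0" using IH lt by simp
      then show ?thesis using I False lin_zero[OF homU] by simp
    qed
  qed
  also have "\<dots> = l 1 [(1, AA l u m)]"
  proof -
    have "[] \<in> ?Q" using m1 by simp
    then show ?thesis by (simp add: finite_Q)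
  qed
  finally show ?thesis by simp
qed

end

lemma part_lt:
  assumes rs: "rs \<in> compositions i s" and i: "2 \<le> i" and r: "r \<in> set rs"
  shows "r < s"
proof -
  have pos: "\<forall>x\<in>set rs. 0 < x" and ln: "length rs = i" and sm: "sum_list rs = s"
    using rs by (auto simp: compositions_def)
  have e: "sum_list rs = r + sum_list (remove1 r rs)"
    using sum_list_map_remove1[of r rs id] r by simp
  have "\<forall>x\<in>set (remove1 r rs). 0 < x" using pos by (meson notin_set_remove1)
  then have "length (remove1 r rs) \<le> sum_list (remove1 r rs)" by (rule len_le_sum)
  moreover have "length (remove1 r rs) = i - 1" using r ln by (simp add: length_remove1)
  ultimately show ?thesis using e sm i by linarith
qed

lemma Obs_in:
  assumes Linf: "L_infinity_algebra V l" and uk: "\<forall>r. r \<le> k \<longrightarrow> u r \<in> V 0"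
  shows "Obs l u k \<in> V 1"
proof -
  have sub: "subspace (V 1)" using Linf by (simp add: L_infinity_algebra_def graded_space_def)
  have deg: "\<And>xs. homog V xs \<Longrightarrow> l (length xs) xs \<in> V (sum_list (map fst xs) + 1)"
    using Linf unfolding L_infinity_algebra_def by blast
  have z: "sum_list (map (\<lambda>r. 0::int) xs) = 0" for xs :: "nat list" by (induction xs) auto
  have t: "l i (map (\<lambda>r. (0, u r)) rs) \<in> V 1" if "i \<in> {2..k+1}" "rs \<in> compositions i (k+1)" for i rs
  proof -
    have "\<forall>r\<in>set rs. r < k + 1" using part_lt that by auto
    then have h: "homog V (map (\<lambda>r. (0::int, u r)) rs)" using uk by (auto simp: homog_def)
    have "length rs = i" using that by (simp add: compositions_def)
    then show ?thesis using deg[OF h] by (simp add: comp_def z)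
  qed
  show ?thesis unfolding Obs_def
    by (intro subspace_sum[OF sub] subspace_scale[OF sub] t)
qed

context linf begin

lemma AA_Suc: "AA l u (Suc k) = l 1 [(0, u (Suc k))] + Obs l u k"
proof -
  define f where "f ps = (multinom (Suc k) ps / fact (length ps)) *\<^sub>R l (length ps) (UL u ps)" for ps
  have "AA l u (Suc k) = (\<Sum>i\<in>{1..Suc k}. \<Sum>ps\<in>compositions i (Suc k). f ps)"
    unfolding AA_def f_def by (rule Pos_sum)
  also have "{1..Suc k} = insert 1 {2..Suc k}" by auto
  also have "(\<Sum>i\<in>insert 1 {2..Suc k}. \<Sum>ps\<in>compositions i (Suc k). f ps) =
      (\<Sum>ps\<in>compositions 1 (Suc k). f ps) + (\<Sum>i\<in>{2..Suc k}. \<Sum>ps\<in>compositions i (Suc k). f ps)"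
    by (rule sum.insert) auto
  also have "(\<Sum>ps\<in>compositions 1 (Suc k). f ps) = l 1 [(0, u (Suc k))]"
  proof -
    have c1: "compositions 1 (Suc k) = {[Suc k]}" by (rule comp_1) simp
    show ?thesis unfolding c1 by (simp add: f_def multinom_def UL_def)
  qed
  also have "(\<Sum>i\<in>{2..Suc k}. \<Sum>ps\<in>compositions i (Suc k). f ps) = Obs l u k"
    unfolding Obs_def
    by (rule sum.cong) (auto simp: f_def compositions_def UL_def intro!: sum.cong)
  finally show ?thesis .
qed

lemma l1l1: "l 1 [(1, l 1 [(0, u s)])] = 0"
proof -
  have J: "(\<Sum>i\<in>{1..length [s]}. \<Sum>\<sigma>\<in>unshuffles i (length [s]). GJ l u i (permute_list \<sigma> [s])) = 0"
    by (rule jac) simp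
  have pl: "permute_list \<sigma> [s] = [s]" if "\<sigma> \<in> unshuffles 1 1" for \<sigma>
  proof -
    have "\<sigma> permutes {..<1}" using that by (simp add: unshuffles_def)
    then have "\<sigma> 0 = 0" using permutes_in_image by fastforce
    then show ?thesis by (simp add: permute_list_def)
  qed
  have "(\<Sum>\<sigma>\<in>unshuffles 1 1. GJ l u 1 (permute_list \<sigma> [s])) = (\<Sum>\<sigma>\<in>unshuffles 1 1. GJ l u 1 [s])"
    using pl by simp
  also have "\<dots> = GJ l u 1 [s]" by (simp add: sum_constant_scaleR card_unsh)
  finally show ?thesis using J by (simp add: GJ_def UL_def)
qed

end

theorem proposition5p12:
  fixes V :: "int \<Rightarrow> 'v::real_vector set"
    and l :: "nat \<Rightarrow> (int \<times> 'v) list \<Rightarrow> 'v"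
    and n :: nat
    and h1 h2 :: "'v \<Rightarrow> 'v"
    and u :: "nat \<Rightarrow> 'v"
  assumes Linf: "L_infinity_algebra V l"
    and fin: "finite_dim_components V"
    and V0: "dim (V 0) = n"
    and H1: "H1_vanishes V l"
    and h1: "linear_between (V 1) (V 0) h1"
    and h2: "linear_between (V 2) (V 1) h2"
    and htpy: "\<forall>x\<in>V 1. l 1 [(0, h1 x)] + h2 (l 1 [(1, x)]) = x"
    and u0: "u 0 = 0"
    and u1: "u 1 \<in> V 0" "l 1 [(0, u 1)] = 0"
    and urec: "\<forall>k\<ge>1. u (k + 1) = - h1 (Obs l u k)"
  shows "formal_MC V l u"
proof -
  have sub: "subspace (V d)" for d using Linf by (simp add: L_infinity_algebra_def graded_space_def)
  have uV: "u k \<in> V 0" for k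
  proof (induction k rule: less_induct)
    case (less k)
    show ?case
    proof (cases "k \<le> 1")
      case True
      then have "k = 0 \<or> k = 1" by linarith
      then show ?thesis
      proof
        assume "k = 0" then show ?thesis using u0 subspace_0[OF sub[of 0]] by simp
      next
        assume "k = 1" then show ?thesis using u1(1) by simp
      qed
    next
      case False
      define j where "j = k - 1"
      have j1: "k = j + 1" and j2: "1 \<le> j" using False unfolding j_def by linarith+
      have "\<forall>r. r \<le> j \<longrightarrow> u r \<in> V 0" using less.IH j1 by simp
      then have O: "Obs l u j \<in> V 1" by (rule Obs_in[OF Linf])
      then have hO: "h1 (Obs l u j) \<in> V 0" using h1 unfolding linear_between_def by blast
      have "u (j + 1) = - h1 (Obs l u j)" using urec j2 by blast
      then have "u k = - h1 (Obs l u j)" using j1 by simp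
      then show ?thesis using subspace_neg[OF sub[of 0] hO] by simp
    qed
  qed
  interpret linf V l u by (rule linf.intro[OF Linf uV])
  have h20: "h2 0 = 0"
  proof -
    have "0 \<in> V 2" using subspace_0[OF sub] .
    moreover have "\<forall>x\<in>V 2. \<forall>y\<in>V 2. \<forall>c. h2 (c *\<^sub>R x + y) = c *\<^sub>R h2 x + h2 y"
      using h2 unfolding linear_between_def by blast
    ultimately have "h2 ((-1) *\<^sub>R 0 + 0) = (-1) *\<^sub>R h2 0 + h2 0" by blast
    then show ?thesis by simp
  qed
  have mb1: "multilinear_bracket V 1 (l 1)" using Linf by (simp add: L_infinity_algebra_def)
  have lneg: "l 1 [(0, - x)] = - l 1 [(0, x)]" if x: "x \<in> V 0" for x
  proof -
    have h: "homog V [(0, x)]" using x by (simp add: homog_def)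
    have z0: "(0::'v) \<in> V 0" using subspace_0[OF sub] .
    have a: "l 1 [(0, c *\<^sub>R x + 0)] = c *\<^sub>R l 1 [(0, x)] + l 1 [(0, 0)]" for c
      using mb1[unfolded multilinear_bracket_def, rule_format, of "[(0, x)]" 0 0 x 0 c] h x z0 by simp
    have h0: "homog V [(0, 0)]" using z0 by (simp add: homog_def)
    have "l 1 [(0, 1 *\<^sub>R 0 + 0)] = 1 *\<^sub>R l 1 [(0, 0)] + l 1 [(0, 0)]"
      using mb1[unfolded multilinear_bracket_def, rule_format, of "[(0, 0)]" 0 0 0 0 1] h0 z0 by simp
    then have "l 1 [(0, 0)] = 0" by simp
    then show ?thesis using a[of "-1"] by simp
  qed
  have AA0: "AA l u (Suc k) = 0" for k
  proof (induction k rule: less_induct)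
    case (less k)
    show ?case
    proof (cases "k = 0")
      case True
      then show ?thesis using AA_Suc[of 0] u1 by (simp add: Obs_def)
    next
      case False
      let ?O = "Obs l u k"
      have OV: "?O \<in> V 1" using Obs_in[OF Linf] uV by simp
      have "l 1 [(1, AA l u (Suc k))] = 0"
      proof (rule main)
        fix a assume "1 \<le> a" "a < Suc k"
        then have ab: "a = Suc (a - 1)" "a - 1 < k" by arith+
        have "AA l u (Suc (a - 1)) = 0" using less.IH[OF ab(2)] .
        then show "AA l u a = 0" using ab(1) by simp
      qed simp
      moreover have "l 1 [(0, u (Suc k))] \<in> V 1" using degU[of "[Suc k]" 1] by (simp add: UL_def)
      ultimately have "l 1 [(1, l 1 [(0, u (Suc k))])] + l 1 [(1, ?O)] = 0"
        using AA_Suc[of k] lin_add[of "l 1 [(0, u (Suc k))]" ?O "[]"] OV by (simp add: homog_def)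
      then have lO: "l 1 [(1, ?O)] = 0" using l1l1 by simp
      have "l 1 [(0, h1 ?O)] + h2 (l 1 [(1, ?O)]) = ?O" using htpy OV by blast
      then have hO: "l 1 [(0, h1 ?O)] = ?O" unfolding lO h20 by simp
      have h1O: "h1 ?O \<in> V 0" using h1 OV by (simp add: linear_between_def)
      have k1: "1 \<le> k" using False by simp
      have "u (k + 1) = - h1 ?O" using urec k1 by blast
      then have "u (Suc k) = - h1 ?O" by simp
      then show ?thesis using AA_Suc[of k] lneg[OF h1O] hO by simp
    qed
  qed
  have fin: "l 1 [(0, u (k + 1))] + Obs l u k = 0" for k
    using AA0[of k] AA_Suc[of k] by simp
  show ?thesis unfolding formal_MC_def
    using u0 uV fin by blast
qed

end
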